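(* Let $A,B$ be points of the plane and $\vec\alpha,\vec\beta$ unit vectors with oriented angle $\Omega=(\widehat{\vec\alpha,\vec\beta})\in\,]0,\pi[$. Let $L>0$ and $X\in W^{2,\infty}(0,L;\mathbb{R}^2)$ with $\|X'(s)\|=1$ for all $s$, $X(0)=A$, $X(L)=B$, $X'(0)=\vec\alpha$, $X'(L)=\vec\beta$, and such that a continuous determination $\phi$ of the angle $\phi(s)=(\widehat{\vec\alpha,X'(s)})$ is nondecreasing on $[0,L]$. Then for every $s\in[0,L]$ the whole curve lies in the closed half-plane bounded by the tangent line at $X(s)$ on the side of $\vec N(s)=\sigma(X'(s))$, where $\sigma$ is the rotation by $+\pi/2$; i.e. $\langle X(t)-X(s),\sigma(X'(s))\rangle\ge0$ for all $s,t\in[0,L]$.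
   Context: $\langle\cdot,\cdot\rangle$ is the Euclidean inner product of $\mathbb{R}^2$. *)

theory Defs
  imports "HOL-Analysis.Analysis"
begin

text \<open>The plane R^2 is modelled by the complex numbers with the Euclidean inner
product (inner on complex: Re x * Re y + Im x * Im y).
sigma is the rotation by +pi/2.\<close>

definition sigma :: "complex \<Rightarrow> complex" where
  "sigma v = \<i> * v"

definition is_oriented_angle :: "complex \<Rightarrow> complex \<Rightarrow> real \<Rightarrow> bool" where
  "is_oriented_angle u v \<theta> \<longleftrightarrow> v = u * cis \<theta>"

end

theory Submission
  imports Defs
begin

lemma inner_cis_aux:
  fixes \<alpha> :: complex
  assumes "norm \<alpha> = 1"
  shows "inner (\<alpha> * cis a) (sigma (\<alpha> * cis b)) = sin (a - b)"
proof -
  have n: "(Re \<alpha>)^2 + (Im \<alpha>)^2 = 1" using assms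
    by (metis cmod_power2 power_one)
  have "inner (\<alpha> * cis a) (sigma (\<alpha> * cis b)) = ((Re \<alpha>)^2 + (Im \<alpha>)^2) * sin (a - b)"
    by (simp add: inner_complex_def sigma_def sin_diff algebra_simps power2_eq_square)
  then show ?thesis using n by simp
qed

lemma deriv_g:
  fixes X X' :: "real \<Rightarrow> complex"
  assumes "(X has_vector_derivative X' x) F"
  shows "((\<lambda>u. inner (X u - X s) c) has_field_derivative inner (X' x) c) F"
proof -
  have "(X has_derivative (\<lambda>h. h *\<^sub>R X' x)) F" using assms by (simp add: has_vector_derivative_def)
  from has_derivative_inner_left[OF this, of c]
  have "((\<lambda>u. inner (X u) c) has_derivative (\<lambda>h. inner (h *\<^sub>R X' x) c)) F" .
  moreover have "(\<lambda>h. inner (h *\<^sub>R X' x) c) = (*) (inner (X' x) c)"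
    by (auto simp: fun_eq_iff)
  ultimately have "((\<lambda>u. inner (X u) c) has_derivative (*) (inner (X' x) c)) F"
    by simp
  then have "((\<lambda>u. inner (X u) c) has_field_derivative inner (X' x) c) F"
    by (simp add: has_field_derivative_def)
  then have "((\<lambda>u. inner (X u) c - inner (X s) c) has_field_derivative inner (X' x) c - 0) F"
    by (intro derivative_intros)
  then show ?thesis by (simp add: inner_diff_left)
qed

theorem lemmaA1:
  fixes A B \<alpha> \<beta> :: complex and \<Omega> L :: real
    and X X' :: "real \<Rightarrow> complex" and \<phi> :: "real \<Rightarrow> real"
  assumes "norm \<alpha> = 1" and "norm \<beta> = 1"
    and "is_oriented_angle \<alpha> \<beta> \<Omega>" and "0 < \<Omega>" and "\<Omega> < pi"
    and "L > 0"
    and "\<forall>s\<in>{0..L}. (X has_vector_derivative X' s) (at s within {0..L})"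
    and "\<exists>K. K-lipschitz_on {0..L} X'"
    and "\<forall>s\<in>{0..L}. norm (X' s) = 1"
    and "X 0 = A" and "X L = B" and "X' 0 = \<alpha>" and "X' L = \<beta>"
    and "continuous_on {0..L} \<phi>"
    and "\<forall>s\<in>{0..L}. is_oriented_angle \<alpha> (X' s) (\<phi> s)"
    and "\<phi> 0 = 0" and "\<phi> L = \<Omega>"
    and "mono_on {0..L} \<phi>"
  shows "\<forall>s\<in>{0..L}. \<forall>t\<in>{0..L}. inner (X t - X s) (sigma (X' s)) \<ge> 0"
proof (intro ballI)
  fix s t assume s: "s \<in> {0..L}" and t: "t \<in> {0..L}"
  define c where "c = sigma (X' s)"
  define g where "g = (\<lambda>u. inner (X u - X s) c)"
  have bnd: "0 \<le> \<phi> u \<and> \<phi> u < pi" if "u \<in> {0..L}" for u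
  proof -
    have "\<phi> 0 \<le> \<phi> u" using assms(18) that \<open>L > 0\<close> by (auto intro: mono_onD)
    moreover have "\<phi> u \<le> \<phi> L" using assms(18) that \<open>L > 0\<close> by (auto intro: mono_onD)
    ultimately show ?thesis using assms by simp
  qed
  have gd: "inner (X' u) c = sin (\<phi> u - \<phi> s)" if "u \<in> {0..L}" for u
    using assms(15) that s inner_cis_aux[OF assms(1)]
    by (simp add: c_def is_oriented_angle_def)
  have D: "(g has_field_derivative sin (\<phi> u - \<phi> s)) (at u within {0..L})" if "u \<in> {0..L}" for u
    using deriv_g[where X=X and X'=X' and x=u and F="at u within {0..L}" and s=s and c=c, OF assms(7)[rule_format, OF that]] gd[OF that] by (simp add: g_def)
  have Dat: "(g has_field_derivative sin (\<phi> u - \<phi> s)) (at u)" if "0 < u" "u < L" for u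
    using D[of u] that at_within_Icc_at[of 0 u L] by simp
  have cont: "continuous_on {0..L} g"
    using D by (meson DERIV_continuous continuous_at_imp_continuous_on continuous_on_eq_continuous_within)
  have g0: "g s = 0" by (simp add: g_def)
  show "inner (X t - X s) (sigma (X' s)) \<ge> 0"
  proof (cases "s \<le> t")
    case True
    have "g s \<le> g t"
    proof (rule DERIV_nonneg_imp_increasing_open[OF True])
      fix x assume x: "s < x" "x < t"
      have "\<phi> s \<le> \<phi> x" using assms(18) s t x by (auto intro: mono_onD)
      moreover have "\<phi> x - \<phi> s < pi" using bnd[of x] bnd[of s] s t x by auto
      ultimately have "sin (\<phi> x - \<phi> s) \<ge> 0" by (intro sin_ge_zero) auto
      then show "\<exists>y. DERIV g x :> y \<and> 0 \<le> y" using Dat[of x] s t x by auto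
    next
      show "continuous_on {s..t} g" using cont s t by (auto intro: continuous_on_subset)
    qed
    then show ?thesis using g0 by (simp add: g_def c_def)
  next
    case False
    then have ts: "t \<le> s" by simp
    have "g t \<ge> g s"
    proof (rule DERIV_nonpos_imp_decreasing_open[OF ts])
      fix x assume x: "t < x" "x < s"
      have "\<phi> x \<le> \<phi> s" using assms(18) s t x by (auto intro: mono_onD)
      moreover have "\<phi> s - \<phi> x < pi" using bnd[of x] bnd[of s] s t x by auto
      ultimately have "sin (\<phi> s - \<phi> x) \<ge> 0" by (intro sin_ge_zero) auto
      then have "sin (\<phi> x - \<phi> s) \<le> 0" by (metis minus_diff_eq sin_minus neg_0_le_iff_le)
      then show "\<exists>y. DERIV g x :> y \<and> y \<le> 0" using Dat[of x] s t x by auto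
    next
      show "continuous_on {t..s} g" using cont s t by (auto intro: continuous_on_subset)
    qed
    then show ?thesis using g0 by (simp add: g_def c_def)
  qed
qed

end
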